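(* Let $d\ge1$, $D=\{1,\dots,d\}$, let $\Pi,Q$ be $d\times d$ stochastic matrices indexed by $D$, let $\pi=(\pi_j)_{j\in D}$ be a probability vector, and let $\varphi^{(O)}_H$ be the quantum Markov chain on $\mathcal{A}_H=\bigotimes_{\mathbb{N}}\mathcal{M}_d$ with initial state $\varphi_{H,0}(\cdot)=\operatorname{Tr}(W_0\,\cdot)$, $W_0=\sum_{j\in D}\pi_je_{jj}$, and transition expectation $\mathcal{E}^{(O)}_H(a\otimes b)=a\diamond P_{H,O}(\mathbf{1}_d)\diamond P_H(b)$. Let $e\in\mathcal{M}_d$ be a projection, and write $e^\perp=\mathbf{1}_d-e=(e^\perp_{ij})_{i,j\in D}$. If $$q:=\sum_{i,j\in D}e^\perp_{ij}<\frac1d,$$ then $e$ is $\varphi^{(O)}_H$-recurrent.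
   Context: $\mathcal{M}_d$: complex $d\times d$ matrices, identity $\mathbf{1}_d$, matrix units $e_{ij}$; $\diamond$ is the Schur (entrywise) product; stochastic matrices have nonnegative entries and row sums $1$. $P_H(A)=\sum_{i,j,k,l}\sqrt{\Pi_{ik}\Pi_{jl}}\,a_{kl}e_{ij}$, $P_{H,O}(B)=\sum_{i,j,k,l}\sqrt{Q_{ik}Q_{jl}}\,b_{kl}e_{ij}$. ($\varphi^{(O)}_H$ is the restriction to the hidden algebra of the Bi-entangled hidden Markov chain built from $\Pi$, $Q$ and $\varphi_{H,0}$.) $j_{H_m}(a)$ denotes $a$ at site $m$ of $\mathcal{A}_H$; the chain satisfies $\varphi^{(O)}_H(j_{H_0}(a_0)\cdots j_{H_n}(a_n))=\varphi_{H,0}(\mathcal{E}^{(O)}_H(a_0\otimes\mathcal{E}^{(O)}_H(a_1\otimes\cdots\mathcal{E}^{(O)}_H(a_n\otimes\mathbf{1}_d)\cdots)))$. For the projection $e$: $\tau_{e;0}=j_{H_0}(e)$, $\tau_{e;k}=j_{H_0}(e^\perp)\cdots j_{H_{k-1}}(e^\perp)j_{H_k}(e)$, and $e\otimes\tau_{e;n}:=j_{H_0}(e)j_{H_1}(e^\perp)\cdots j_{H_n}(e^\perp)j_{H_{n+1}}(e)$. The projection $e$ is $\varphi^{(O)}_H$-recurrent if $\varphi^{(O)}_H(j_{H_0}(e))\ne0$ and $\frac{1}{\varphi^{(O)}_H(j_{H_0}(e))}\sum_{n\ge0}\varphi^{(O)}_H(e\otimes\tau_{e;n})=1$. *)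

theory Defs
  imports Complex_Main
begin

text \<open>Complex d x d matrices are represented as functions nat => nat => complex,
  indexed by D = {1..d}; entries outside D are irrelevant.\<close>

type_synonym cmat = "nat \<Rightarrow> nat \<Rightarrow> complex"

definition idx :: "nat \<Rightarrow> nat set" where
  "idx d = {1..d}"

definition one_m :: cmat where
  "one_m = (\<lambda>i j. if i = j then 1 else 0)"

definition mmult :: "nat \<Rightarrow> cmat \<Rightarrow> cmat \<Rightarrow> cmat" where
  "mmult d a b = (\<lambda>i j. \<Sum>k\<in>idx d. a i k * b k j)"

definition mtrace :: "nat \<Rightarrow> cmat \<Rightarrow> complex" where
  "mtrace d a = (\<Sum>j\<in>idx d. a j j)"

definition schur :: "cmat \<Rightarrow> cmat \<Rightarrow> cmat" where
  "schur a b = (\<lambda>i j. a i j * b i j)"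

definition stochastic :: "nat \<Rightarrow> (nat \<Rightarrow> nat \<Rightarrow> real) \<Rightarrow> bool" where
  "stochastic d P \<longleftrightarrow> (\<forall>i\<in>idx d. \<forall>j\<in>idx d. 0 \<le> P i j) \<and> (\<forall>i\<in>idx d. (\<Sum>j\<in>idx d. P i j) = 1)"

definition prob_vector :: "nat \<Rightarrow> (nat \<Rightarrow> real) \<Rightarrow> bool" where
  "prob_vector d p \<longleftrightarrow> (\<forall>j\<in>idx d. 0 \<le> p j) \<and> (\<Sum>j\<in>idx d. p j) = 1"

definition is_projection :: "nat \<Rightarrow> cmat \<Rightarrow> bool" where
  "is_projection d e \<longleftrightarrow> (\<forall>i\<in>idx d. \<forall>j\<in>idx d. mmult d e e i j = e i j) \<and>
                          (\<forall>i\<in>idx d. \<forall>j\<in>idx d. cnj (e j i) = e i j)"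

definition e_perp :: "cmat \<Rightarrow> cmat" where
  "e_perp e = (\<lambda>i j. one_m i j - e i j)"

definition P_H :: "nat \<Rightarrow> (nat \<Rightarrow> nat \<Rightarrow> real) \<Rightarrow> cmat \<Rightarrow> cmat" where
  "P_H d Pi A = (\<lambda>i j. \<Sum>k\<in>idx d. \<Sum>l\<in>idx d. complex_of_real (sqrt (Pi i k * Pi j l)) * A k l)"

definition P_HO :: "nat \<Rightarrow> (nat \<Rightarrow> nat \<Rightarrow> real) \<Rightarrow> cmat \<Rightarrow> cmat" where
  "P_HO d Q B = (\<lambda>i j. \<Sum>k\<in>idx d. \<Sum>l\<in>idx d. complex_of_real (sqrt (Q i k * Q j l)) * B k l)"

definition trans_exp :: "nat \<Rightarrow> (nat \<Rightarrow> nat \<Rightarrow> real) \<Rightarrow> (nat \<Rightarrow> nat \<Rightarrow> real) \<Rightarrow> cmat \<Rightarrow> cmat \<Rightarrow> cmat" where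
  "trans_exp d Pi Q a b = schur (schur a (P_HO d Q one_m)) (P_H d Pi b)"

fun chain_nest :: "nat \<Rightarrow> (nat \<Rightarrow> nat \<Rightarrow> real) \<Rightarrow> (nat \<Rightarrow> nat \<Rightarrow> real) \<Rightarrow> cmat list \<Rightarrow> cmat" where
  "chain_nest d Pi Q [] = one_m"
| "chain_nest d Pi Q (a # as) = trans_exp d Pi Q a (chain_nest d Pi Q as)"

definition W0 :: "(nat \<Rightarrow> real) \<Rightarrow> cmat" where
  "W0 p = (\<lambda>i j. if i = j then complex_of_real (p i) else 0)"

definition phi_H0 :: "nat \<Rightarrow> (nat \<Rightarrow> real) \<Rightarrow> cmat \<Rightarrow> complex" where
  "phi_H0 d p x = mtrace d (mmult d (W0 p) x)"

text \<open>phi_H^(O)(j_{H_0}(a_0) ... j_{H_n}(a_n)) for the list [a_0,...,a_n].\<close>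
definition phi_HO :: "nat \<Rightarrow> (nat \<Rightarrow> nat \<Rightarrow> real) \<Rightarrow> (nat \<Rightarrow> nat \<Rightarrow> real) \<Rightarrow> (nat \<Rightarrow> real) \<Rightarrow> cmat list \<Rightarrow> complex" where
  "phi_HO d Pi Q p as = phi_H0 d p (chain_nest d Pi Q as)"

text \<open>e \<otimes> tau_{e;n} = j_0(e) j_1(e^perp) ... j_n(e^perp) j_{n+1}(e).\<close>
definition e_tau :: "cmat \<Rightarrow> nat \<Rightarrow> cmat list" where
  "e_tau e n = e # replicate n (e_perp e) @ [e]"

definition recurrent :: "nat \<Rightarrow> (nat \<Rightarrow> nat \<Rightarrow> real) \<Rightarrow> (nat \<Rightarrow> nat \<Rightarrow> real) \<Rightarrow> (nat \<Rightarrow> real) \<Rightarrow> cmat \<Rightarrow> bool" where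
  "recurrent d Pi Q p e \<longleftrightarrow>
     phi_HO d Pi Q p [e] \<noteq> 0 \<and>
     ((\<lambda>n. phi_HO d Pi Q p (e_tau e n) / phi_HO d Pi Q p [e]) sums 1)"

end

theory Submission
  imports Defs
begin

locale setting =
  fixes d :: nat and Pi Q :: "nat \<Rightarrow> nat \<Rightarrow> real" and e :: cmat
  assumes d1: "d \<ge> 1"
    and stP: "stochastic d Pi" and stQ: "stochastic d Q"
    and proj: "is_projection d e"
    and q_lt: "Re (\<Sum>i\<in>idx d. \<Sum>j\<in>idx d. e_perp e i j) < 1"
begin

abbreviation "I \<equiv> idx d"
abbreviation "E \<equiv> e_perp e"

lemma finI[simp]: "finite I" by (simp add: idx_def)

lemma one_left: "i \<in> I \<Longrightarrow> (\<Sum>m\<in>I. one_m i m * f m) = f i"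
proof -
  assume "i \<in> I"
  have "(\<Sum>m\<in>I. one_m i m * f m) = (\<Sum>m\<in>I. if i = m then f m else 0)"
    by (intro sum.cong) (auto simp: one_m_def)
  then show ?thesis using \<open>i \<in> I\<close> by simp
qed
lemma one_right: "j \<in> I \<Longrightarrow> (\<Sum>m\<in>I. f m * one_m m j) = f j"
proof -
  assume "j \<in> I"
  have "(\<Sum>m\<in>I. f m * one_m m j) = (\<Sum>m\<in>I. if j = m then f m else 0)"
    by (intro sum.cong) (auto simp: one_m_def)
  then show ?thesis using \<open>j \<in> I\<close> by simp
qed

lemma e_idem: "i \<in> I \<Longrightarrow> j \<in> I \<Longrightarrow> (\<Sum>m\<in>I. e i m * e m j) = e i j"
  using proj unfolding is_projection_def mmult_def by auto

lemma e_herm: "i \<in> I \<Longrightarrow> j \<in> I \<Longrightarrow> cnj (e j i) = e i j"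
  using proj unfolding is_projection_def by auto

lemma E_idem: "i \<in> I \<Longrightarrow> j \<in> I \<Longrightarrow> (\<Sum>m\<in>I. E i m * E m j) = E i j"
proof -
  assume i: "i \<in> I" and j: "j \<in> I"
  have "(\<Sum>m\<in>I. E i m * E m j) = (\<Sum>m\<in>I. one_m i m * one_m m j) - (\<Sum>m\<in>I. one_m i m * e m j)
      - (\<Sum>m\<in>I. e i m * one_m m j) + (\<Sum>m\<in>I. e i m * e m j)"
    by (simp add: e_perp_def algebra_simps sum.distrib sum_subtractf)
  also have "\<dots> = one_m i j - e i j - e i j + e i j"
    using i j e_idem[OF i j] one_left[OF i] one_right[OF j] by simp
  finally show ?thesis by (simp add: e_perp_def)
qed

lemma E_herm: "i \<in> I \<Longrightarrow> j \<in> I \<Longrightarrow> cnj (E j i) = E i j"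
  using e_herm by (auto simp: e_perp_def one_m_def)

lemma bilin:
  fixes A :: cmat
  assumes idem: "\<And>i j. i \<in> I \<Longrightarrow> j \<in> I \<Longrightarrow> (\<Sum>m\<in>I. A i m * A m j) = A i j"
    and herm: "\<And>i j. i \<in> I \<Longrightarrow> j \<in> I \<Longrightarrow> cnj (A j i) = A i j"
  shows "(\<Sum>m\<in>I. cnj (\<Sum>i\<in>I. A m i * \<alpha> i) * (\<Sum>j\<in>I. A m j * \<beta> j))
       = (\<Sum>i\<in>I. \<Sum>j\<in>I. cnj (\<alpha> i) * A i j * \<beta> j)"
proof -
  have "(\<Sum>m\<in>I. cnj (\<Sum>i\<in>I. A m i * \<alpha> i) * (\<Sum>j\<in>I. A m j * \<beta> j))
      = (\<Sum>m\<in>I. \<Sum>i\<in>I. \<Sum>j\<in>I. cnj (\<alpha> i) * (A i m * A m j) * \<beta> j)"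
    unfolding cnj_sum sum_product
    by (intro sum.cong refl) (simp add: herm mult_ac)
  also have "\<dots> = (\<Sum>i\<in>I. \<Sum>j\<in>I. \<Sum>m\<in>I. cnj (\<alpha> i) * (A i m * A m j) * \<beta> j)"
    by (subst sum.swap) (intro sum.cong refl sum.swap)
  also have "\<dots> = (\<Sum>i\<in>I. \<Sum>j\<in>I. cnj (\<alpha> i) * A i j * \<beta> j)"
    by (intro sum.cong refl) (simp add: idem flip: sum_distrib_left sum_distrib_right)
  finally show ?thesis .
qed

lemma swap3: "(\<Sum>i\<in>A. \<Sum>j\<in>B. \<Sum>k\<in>C. f i j k) = (\<Sum>k\<in>C. \<Sum>i\<in>A. \<Sum>j\<in>B. f i j k)"
proof -
  have "(\<Sum>i\<in>A. \<Sum>j\<in>B. \<Sum>k\<in>C. f i j k) = (\<Sum>i\<in>A. \<Sum>k\<in>C. \<Sum>j\<in>B. f i j k)"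
    by (intro sum.cong refl) (rule sum.swap)
  also have "\<dots> = (\<Sum>k\<in>C. \<Sum>i\<in>A. \<Sum>j\<in>B. f i j k)"
    by (rule sum.swap)
  finally show ?thesis .
qed

definition cf :: "nat \<Rightarrow> nat \<Rightarrow> nat \<Rightarrow> complex" where
  "cf j k l = complex_of_real (sqrt (Q j k) * sqrt (Pi j l))"

definition nsq :: "(nat \<Rightarrow> complex) \<Rightarrow> real" where
  "nsq x = (\<Sum>i\<in>I. (cmod (x i))\<^sup>2)"

definition av :: "nat \<Rightarrow> nat \<Rightarrow> (nat \<Rightarrow> complex) \<Rightarrow> nat \<Rightarrow> complex" where
  "av k m x = (\<lambda>l. \<Sum>j\<in>I. E m j * (cf j k l * x j))"

fun Qf :: "nat \<Rightarrow> (nat \<Rightarrow> complex) \<Rightarrow> real" where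
  "Qf 0 x = nsq x"
| "Qf (Suc n) x = (\<Sum>k\<in>I. \<Sum>m\<in>I. Qf n (av k m x))"

lemma cnj_cf[simp]: "cnj (cf j k l) = cf j k l"
  by (simp add: cf_def)

lemma PHO1: "P_HO d Q one_m i j = (\<Sum>k\<in>I. complex_of_real (sqrt (Q i k) * sqrt (Q j k)))"
proof -
  have "P_HO d Q one_m i j = (\<Sum>k\<in>I. complex_of_real (sqrt (Q i k * Q j k)))"
    unfolding P_HO_def
  proof (intro sum.cong refl)
    fix k assume k: "k \<in> I"
    show "(\<Sum>l\<in>I. complex_of_real (sqrt (Q i k * Q j l)) * one_m k l) = complex_of_real (sqrt (Q i k * Q j k))"
      using one_left[OF k, of "\<lambda>l. complex_of_real (sqrt (Q i k * Q j l))"] by (simp add: mult.commute)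
  qed
  then show ?thesis by (simp add: real_sqrt_mult)
qed

lemma PH: "P_H d Pi b i j = (\<Sum>l\<in>I. \<Sum>l'\<in>I. complex_of_real (sqrt (Pi i l) * sqrt (Pi j l')) * b l l')"
  unfolding P_H_def by (simp add: real_sqrt_mult)

lemma nsq_form: "complex_of_real (nsq x) = (\<Sum>i\<in>I. \<Sum>j\<in>I. cnj (x i) * one_m i j * x j)"
proof -
  have "(\<Sum>i\<in>I. \<Sum>j\<in>I. cnj (x i) * one_m i j * x j) = (\<Sum>i\<in>I. cnj (x i) * x i)"
  proof (intro sum.cong refl)
    fix i assume i: "i \<in> I"
    show "(\<Sum>j\<in>I. cnj (x i) * one_m i j * x j) = cnj (x i) * x i"
      using one_left[OF i, of "\<lambda>j. cnj (x i) * x j"] by (simp add: mult_ac)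
  qed
  then show ?thesis unfolding nsq_def of_real_sum complex_norm_square
    by (simp add: mult.commute)
qed

lemma form_step:
  assumes IH: "\<And>y. (\<Sum>i\<in>I. \<Sum>j\<in>I. cnj (y i) * b i j * y j) = complex_of_real (Qf n y)"
  shows "(\<Sum>i\<in>I. \<Sum>j\<in>I. cnj (x i) * trans_exp d Pi Q E b i j * x j) = complex_of_real (Qf (Suc n) x)"
proof -
  define F where "F i j k l l' = cnj (cf i k l * x i) * E i j * (cf j k l' * x j) * b l l'" for i j k l l'
  have "(\<Sum>i\<in>I. \<Sum>j\<in>I. cnj (x i) * trans_exp d Pi Q E b i j * x j)
     = (\<Sum>i\<in>I. \<Sum>j\<in>I. \<Sum>l\<in>I. \<Sum>k\<in>I. \<Sum>l'\<in>I. F i j k l l')"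
    unfolding trans_exp_def schur_def PHO1 PH F_def cf_def
    by (simp add: sum_distrib_left sum_distrib_right mult_ac real_sqrt_mult)
  also have "\<dots> = (\<Sum>l\<in>I. \<Sum>k\<in>I. \<Sum>l'\<in>I. \<Sum>i\<in>I. \<Sum>j\<in>I. F i j k l l')"
  proof -
    have "(\<Sum>i\<in>I. \<Sum>j\<in>I. \<Sum>l\<in>I. \<Sum>k\<in>I. \<Sum>l'\<in>I. F i j k l l')
        = (\<Sum>l\<in>I. \<Sum>i\<in>I. \<Sum>j\<in>I. \<Sum>k\<in>I. \<Sum>l'\<in>I. F i j k l l')"
      by (rule swap3)
    also have "\<dots> = (\<Sum>l\<in>I. \<Sum>k\<in>I. \<Sum>i\<in>I. \<Sum>j\<in>I. \<Sum>l'\<in>I. F i j k l l')"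
      by (rule sum.cong[OF refl], rule swap3)
    also have "\<dots> = (\<Sum>l\<in>I. \<Sum>k\<in>I. \<Sum>l'\<in>I. \<Sum>i\<in>I. \<Sum>j\<in>I. F i j k l l')"
      by (rule sum.cong[OF refl], rule sum.cong[OF refl], rule swap3)
    finally show ?thesis .
  qed
  also have "\<dots> = (\<Sum>l\<in>I. \<Sum>k\<in>I. \<Sum>l'\<in>I. (\<Sum>m\<in>I. cnj (av k m x l) * av k m x l') * b l l')"
    unfolding F_def av_def
    by (intro sum.cong refl, subst bilin[OF E_idem E_herm], simp_all add: sum_distrib_right)
  also have "\<dots> = (\<Sum>k\<in>I. \<Sum>m\<in>I. \<Sum>l\<in>I. \<Sum>l'\<in>I. cnj (av k m x l) * b l l' * av k m x l')"
  proof -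
    have "(\<Sum>l\<in>I. \<Sum>k\<in>I. \<Sum>l'\<in>I. (\<Sum>m\<in>I. cnj (av k m x l) * av k m x l') * b l l')
       = (\<Sum>l\<in>I. \<Sum>k\<in>I. \<Sum>l'\<in>I. \<Sum>m\<in>I. cnj (av k m x l) * b l l' * av k m x l')"
      by (simp add: sum_distrib_right sum_distrib_left mult_ac)
    also have "\<dots> = (\<Sum>k\<in>I. \<Sum>l\<in>I. \<Sum>l'\<in>I. \<Sum>m\<in>I. cnj (av k m x l) * b l l' * av k m x l')"
      by (rule sum.swap)
    also have "\<dots> = (\<Sum>k\<in>I. \<Sum>m\<in>I. \<Sum>l\<in>I. \<Sum>l'\<in>I. cnj (av k m x l) * b l l' * av k m x l')"
      by (rule sum.cong[OF refl], rule swap3)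
    finally show ?thesis .
  qed
  also have "\<dots> = complex_of_real (Qf (Suc n) x)"
    by (simp add: IH)
  finally show ?thesis .
qed

lemma form: "(\<Sum>i\<in>I. \<Sum>j\<in>I. cnj (x i) * chain_nest d Pi Q (replicate n E) i j * x j) = complex_of_real (Qf n x)"
proof (induction n arbitrary: x)
  case 0
  then show ?case by (simp add: nsq_form)
next
  case (Suc n)
  show ?case using form_step[OF Suc.IH] by (simp only: replicate_Suc chain_nest.simps)
qed

lemma quad:
  fixes A :: cmat
  assumes idem: "\<And>i j. i \<in> I \<Longrightarrow> j \<in> I \<Longrightarrow> (\<Sum>m\<in>I. A i m * A m j) = A i j"
    and herm: "\<And>i j. i \<in> I \<Longrightarrow> j \<in> I \<Longrightarrow> cnj (A j i) = A i j"
  shows "complex_of_real (\<Sum>m\<in>I. (cmod (\<Sum>j\<in>I. A m j * z j))\<^sup>2) = (\<Sum>i\<in>I. \<Sum>j\<in>I. cnj (z i) * A i j * z j)"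
proof -
  have "complex_of_real (\<Sum>m\<in>I. (cmod (\<Sum>j\<in>I. A m j * z j))\<^sup>2)
      = (\<Sum>m\<in>I. cnj (\<Sum>i\<in>I. A m i * z i) * (\<Sum>j\<in>I. A m j * z j))"
    unfolding of_real_sum complex_norm_square by (simp add: mult.commute)
  also have "\<dots> = (\<Sum>i\<in>I. \<Sum>j\<in>I. cnj (z i) * A i j * z j)"
    by (rule bilin[OF idem herm])
  finally show ?thesis .
qed

lemma pyth: "nsq (\<lambda>m. \<Sum>j\<in>I. E m j * z j) + nsq (\<lambda>m. \<Sum>j\<in>I. e m j * z j) = nsq z"
proof -
  have "complex_of_real (nsq (\<lambda>m. \<Sum>j\<in>I. E m j * z j) + nsq (\<lambda>m. \<Sum>j\<in>I. e m j * z j))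
     = (\<Sum>i\<in>I. \<Sum>j\<in>I. cnj (z i) * E i j * z j) + (\<Sum>i\<in>I. \<Sum>j\<in>I. cnj (z i) * e i j * z j)"
    unfolding nsq_def of_real_add
    by (simp only: quad[OF E_idem E_herm] quad[OF e_idem e_herm])
  also have "\<dots> = (\<Sum>i\<in>I. \<Sum>j\<in>I. cnj (z i) * one_m i j * z j)"
    by (simp add: e_perp_def algebra_simps flip: sum.distrib)
  also have "\<dots> = complex_of_real (nsq z)" by (simp add: nsq_form)
  finally show ?thesis by (simp only: of_real_eq_iff)
qed

lemma Qf_nonneg: "0 \<le> Qf n x"
  by (induction n arbitrary: x) (auto simp: nsq_def intro!: sum_nonneg)

lemma nsq_nonneg: "0 \<le> nsq x"
  by (auto simp: nsq_def intro!: sum_nonneg)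

definition zz :: "nat \<Rightarrow> nat \<Rightarrow> (nat \<Rightarrow> complex) \<Rightarrow> nat \<Rightarrow> complex" where
  "zz k l y = (\<lambda>j. cf j k l * y j)"

definition ea :: "nat \<Rightarrow> nat \<Rightarrow> (nat \<Rightarrow> complex) \<Rightarrow> nat \<Rightarrow> complex" where
  "ea k l y = (\<lambda>m. \<Sum>j\<in>I. e m j * zz k l y j)"

definition L1 :: "(nat \<Rightarrow> complex) \<Rightarrow> real" where
  "L1 y = (\<Sum>k\<in>I. \<Sum>l\<in>I. nsq (ea k l y))"

lemma Pi_nn: "i \<in> I \<Longrightarrow> j \<in> I \<Longrightarrow> 0 \<le> Pi i j" using stP by (auto simp: stochastic_def)
lemma Q_nn: "i \<in> I \<Longrightarrow> j \<in> I \<Longrightarrow> 0 \<le> Q i j" using stQ by (auto simp: stochastic_def)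
lemma Pi_sum: "i \<in> I \<Longrightarrow> (\<Sum>j\<in>I. Pi i j) = 1" using stP by (auto simp: stochastic_def)
lemma Q_sum: "i \<in> I \<Longrightarrow> (\<Sum>j\<in>I. Q i j) = 1" using stQ by (auto simp: stochastic_def)

lemma cf_sq: "j \<in> I \<Longrightarrow> k \<in> I \<Longrightarrow> l \<in> I \<Longrightarrow> (cmod (cf j k l * z))\<^sup>2 = Q j k * (Pi j l * (cmod z)\<^sup>2)"
proof -
  assume j: "j \<in> I" and k: "k \<in> I" and l: "l \<in> I"
  have "(cmod (cf j k l * z))\<^sup>2 = (sqrt (Q j k))\<^sup>2 * ((sqrt (Pi j l))\<^sup>2 * (cmod z)\<^sup>2)"
    unfolding cf_def norm_mult norm_of_real power_mult_distrib abs_mult power2_abs by simp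
  also have "\<dots> = Q j k * (Pi j l * (cmod z)\<^sup>2)"
    using Pi_nn[OF j l] Q_nn[OF j k] by simp
  finally show ?thesis .
qed

lemma sum_zz: "(\<Sum>k\<in>I. \<Sum>l\<in>I. nsq (zz k l y)) = nsq y"
proof -
  have "(\<Sum>k\<in>I. \<Sum>l\<in>I. nsq (zz k l y)) = (\<Sum>k\<in>I. \<Sum>l\<in>I. \<Sum>j\<in>I. Q j k * (Pi j l * (cmod (y j))\<^sup>2))"
    unfolding nsq_def zz_def
    by (intro sum.cong refl) (simp only: cf_sq)
  also have "\<dots> = (\<Sum>j\<in>I. \<Sum>k\<in>I. \<Sum>l\<in>I. Q j k * (Pi j l * (cmod (y j))\<^sup>2))"
    by (rule swap3)
  also have "\<dots> = (\<Sum>j\<in>I. (cmod (y j))\<^sup>2)"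
    by (intro sum.cong refl) (simp add: Pi_sum Q_sum flip: sum_distrib_left sum_distrib_right)
  finally show ?thesis by (simp add: nsq_def)
qed

lemma Qf1: "Qf 1 y + L1 y = nsq y"
proof -
  have "Qf 1 y = (\<Sum>k\<in>I. \<Sum>l\<in>I. nsq (\<lambda>m. \<Sum>j\<in>I. E m j * zz k l y j))"
  proof -
    have "Qf 1 y = (\<Sum>k\<in>I. \<Sum>m\<in>I. \<Sum>l\<in>I. (cmod (av k m y l))\<^sup>2)"
      by (simp add: nsq_def)
    also have "\<dots> = (\<Sum>k\<in>I. \<Sum>l\<in>I. \<Sum>m\<in>I. (cmod (av k m y l))\<^sup>2)"
      by (rule sum.cong[OF refl], rule sum.swap)
    finally show ?thesis by (simp add: nsq_def av_def zz_def)
  qed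
  then have "Qf 1 y + L1 y = (\<Sum>k\<in>I. \<Sum>l\<in>I. nsq (zz k l y))"
    by (simp add: L1_def ea_def pyth flip: sum.distrib)
  then show ?thesis by (simp add: sum_zz)
qed

lemma L1_nonneg: "0 \<le> L1 y"
  by (auto simp: L1_def intro!: sum_nonneg nsq_nonneg)

lemma L1_le: "L1 y \<le> nsq y"
  using Qf1[of y] Qf_nonneg[of 1 y] by linarith

lemma Qf_le:
  assumes "\<And>y. Qf n y \<le> c * nsq y"
  shows "Qf (n + k) x \<le> c * Qf k x"
proof (induction k arbitrary: x)
  case 0
  then show ?case using assms by simp
next
  case (Suc k)
  have "Qf (n + Suc k) x = (\<Sum>k'\<in>I. \<Sum>m\<in>I. Qf (n + k) (av k' m x))" by simp
  also have "\<dots> \<le> (\<Sum>k'\<in>I. \<Sum>m\<in>I. c * Qf k (av k' m x))"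
    by (intro sum_mono Suc.IH)
  also have "\<dots> = c * Qf (Suc k) x" by (simp add: sum_distrib_left)
  finally show ?case .
qed

lemma sq_add_le: "(cmod (a + b))\<^sup>2 \<le> 2 * (cmod a)\<^sup>2 + 2 * (cmod b)\<^sup>2"
proof -
  have "cmod (a + b) \<le> cmod a + cmod b" by (rule norm_triangle_ineq)
  then have "(cmod (a + b))\<^sup>2 \<le> (cmod a + cmod b)\<^sup>2"
    by (simp add: power_mono)
  also have "\<dots> \<le> 2 * (cmod a)\<^sup>2 + 2 * (cmod b)\<^sup>2"
  proof -
    have h: "0 \<le> (cmod a - cmod b)\<^sup>2" by simp
    have "(cmod a + cmod b)\<^sup>2 = 2 * (cmod a)\<^sup>2 + 2 * (cmod b)\<^sup>2 - (cmod a - cmod b)\<^sup>2"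
      by (simp add: power2_eq_square algebra_simps)
    with h show ?thesis by linarith
  qed
  finally show ?thesis .
qed

lemma nsq_add_le: "nsq (\<lambda>m. a m + b m) \<le> 2 * nsq a + 2 * nsq b"
  unfolding nsq_def by (simp add: sum_distrib_left flip: sum.distrib) (intro sum_mono sq_add_le)

lemma ea_add: "ea k l (\<lambda>j. y j + z j) = (\<lambda>m. ea k l y m + ea k l z m)"
  by (simp add: ea_def zz_def algebra_simps sum.distrib)

lemma L1_add: "L1 (\<lambda>j. y j + z j) \<le> 2 * L1 y + 2 * L1 z"
  unfolding L1_def ea_add by (simp add: sum_distrib_left flip: sum.distrib) (intro sum_mono nsq_add_le)

lemma L1_scale: "L1 (\<lambda>j. c * y j) = (cmod c)\<^sup>2 * L1 y"
proof -
  have "ea k l (\<lambda>j. c * y j) = (\<lambda>m. c * ea k l y m)" for k l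
    by (simp add: ea_def zz_def sum_distrib_left mult_ac)
  then show ?thesis
    by (simp add: L1_def nsq_def sum_distrib_left norm_mult power_mult_distrib)
qed

definition vv :: "nat \<Rightarrow> nat \<Rightarrow> complex" where
  "vv m = (\<lambda>l. complex_of_real (sqrt (Pi m l)))"

lemma nsq_vv: "m \<in> I \<Longrightarrow> nsq (vv m) = 1"
  by (simp add: nsq_def vv_def Pi_nn Pi_sum)

lemma av_decomp: "k \<in> I \<Longrightarrow> m \<in> I \<Longrightarrow>
   (\<lambda>l. (x m * complex_of_real (sqrt (Q m k))) * vv m l) = (\<lambda>l. av k m x l + ea k l x m)"
proof (rule ext)
  fix l assume k: "k \<in> I" and m: "m \<in> I"
  have "av k m x l = (\<Sum>j\<in>I. one_m m j * zz k l x j) - ea k l x m"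
    by (simp add: av_def ea_def zz_def e_perp_def algebra_simps sum_subtractf)
  also have "\<dots> = zz k l x m - ea k l x m" using one_left[OF m] by simp
  finally show "(x m * complex_of_real (sqrt (Q m k))) * vv m l = av k m x l + ea k l x m"
    by (simp add: zz_def cf_def vv_def mult_ac)
qed

lemma sum_r: "(\<Sum>k\<in>I. \<Sum>m\<in>I. nsq (\<lambda>l. ea k l x m)) = L1 x"
proof -
  have "(\<Sum>k\<in>I. \<Sum>m\<in>I. nsq (\<lambda>l. ea k l x m)) = (\<Sum>k\<in>I. \<Sum>m\<in>I. \<Sum>l\<in>I. (cmod (ea k l x m))\<^sup>2)"
    by (simp add: nsq_def)
  also have "\<dots> = (\<Sum>k\<in>I. \<Sum>l\<in>I. \<Sum>m\<in>I. (cmod (ea k l x m))\<^sup>2)"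
    by (rule sum.cong[OF refl], rule sum.swap)
  finally show ?thesis by (simp add: L1_def nsq_def)
qed

lemma sum_xQ: "(\<Sum>k\<in>I. \<Sum>m\<in>I. (cmod (x m))\<^sup>2 * Q m k) = nsq x"
proof -
  have "(\<Sum>k\<in>I. \<Sum>m\<in>I. (cmod (x m))\<^sup>2 * Q m k) = (\<Sum>m\<in>I. \<Sum>k\<in>I. (cmod (x m))\<^sup>2 * Q m k)"
    by (rule sum.swap)
  also have "\<dots> = nsq x"
    unfolding nsq_def by (intro sum.cong refl) (simp add: Q_sum flip: sum_distrib_left)
  finally show ?thesis .
qed

lemma two_step:
  assumes kap: "\<And>m. m \<in> I \<Longrightarrow> \<kappa> \<le> L1 (vv m)" and kap0: "0 \<le> \<kappa>"
  shows "Qf 2 x \<le> (1 - \<kappa> / 2) * nsq x"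
proof -
  have each: "\<kappa> / 2 * ((cmod (x m))\<^sup>2 * Q m k) - nsq (\<lambda>l. ea k l x m) \<le> L1 (av k m x)"
    if k: "k \<in> I" and m: "m \<in> I" for k m
  proof -
    have "L1 (\<lambda>l. (x m * complex_of_real (sqrt (Q m k))) * vv m l) \<le> 2 * L1 (av k m x) + 2 * L1 (\<lambda>l. ea k l x m)"
      unfolding av_decomp[OF k m] by (rule L1_add)
    moreover have "L1 (\<lambda>l. (x m * complex_of_real (sqrt (Q m k))) * vv m l) = (cmod (x m))\<^sup>2 * Q m k * L1 (vv m)"
      unfolding L1_scale by (simp add: norm_mult power_mult_distrib Q_nn k m)
    moreover have "(cmod (x m))\<^sup>2 * Q m k * \<kappa> \<le> (cmod (x m))\<^sup>2 * Q m k * L1 (vv m)"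
      by (intro mult_left_mono kap m) (simp add: Q_nn k m)
    moreover have "L1 (\<lambda>l. ea k l x m) \<le> nsq (\<lambda>l. ea k l x m)" by (rule L1_le)
    moreover have "\<kappa> / 2 * ((cmod (x m))\<^sup>2 * Q m k) = ((cmod (x m))\<^sup>2 * Q m k * \<kappa>) / 2"
      by (simp add: field_simps)
    ultimately show ?thesis by linarith
  qed
  have "Qf 2 x = (\<Sum>k\<in>I. \<Sum>m\<in>I. Qf 1 (av k m x))"
    by (subst Suc_1[symmetric], rule Qf.simps(2))
  also have "\<dots> = (\<Sum>k\<in>I. \<Sum>m\<in>I. nsq (av k m x) - L1 (av k m x))"
  proof -
    have q1: "Qf 1 y = nsq y - L1 y" for y using Qf1[of y] by linarith
    show ?thesis by (simp only: q1)
  qed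
  also have "\<dots> = (\<Sum>k\<in>I. \<Sum>m\<in>I. nsq (av k m x)) - (\<Sum>k\<in>I. \<Sum>m\<in>I. L1 (av k m x))"
    by (simp add: sum_subtractf)
  finally have A: "Qf 2 x = (\<Sum>k\<in>I. \<Sum>m\<in>I. nsq (av k m x)) - (\<Sum>k\<in>I. \<Sum>m\<in>I. L1 (av k m x))" .
  have A2: "(\<Sum>k\<in>I. \<Sum>m\<in>I. nsq (av k m x)) = nsq x - L1 x"
  proof -
    have "Qf 1 x = (\<Sum>k\<in>I. \<Sum>m\<in>I. nsq (av k m x))" by (simp only: One_nat_def Qf.simps)
    then show ?thesis using Qf1[of x] by linarith
  qed
  have B: "(\<Sum>k\<in>I. \<Sum>m\<in>I. \<kappa> / 2 * ((cmod (x m))\<^sup>2 * Q m k) - nsq (\<lambda>l. ea k l x m))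
      \<le> (\<Sum>k\<in>I. \<Sum>m\<in>I. L1 (av k m x))"
    by (intro sum_mono each)
  have C: "(\<Sum>k\<in>I. \<Sum>m\<in>I. \<kappa> / 2 * ((cmod (x m))\<^sup>2 * Q m k) - nsq (\<lambda>l. ea k l x m))
      = \<kappa> / 2 * nsq x - L1 x"
  proof -
    have "(\<Sum>k\<in>I. \<Sum>m\<in>I. \<kappa> / 2 * ((cmod (x m))\<^sup>2 * Q m k) - nsq (\<lambda>l. ea k l x m))
      = (\<Sum>k\<in>I. \<Sum>m\<in>I. \<kappa> / 2 * ((cmod (x m))\<^sup>2 * Q m k)) - (\<Sum>k\<in>I. \<Sum>m\<in>I. nsq (\<lambda>l. ea k l x m))"
      by (simp only: sum_subtractf)
    also have "\<dots> = \<kappa> / 2 * (\<Sum>k\<in>I. \<Sum>m\<in>I. (cmod (x m))\<^sup>2 * Q m k) - L1 x"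
      by (simp only: sum_r sum_distrib_left)
    finally show ?thesis by (simp only: sum_xQ)
  qed
  have D: "(1 - \<kappa> / 2) * nsq x = nsq x - \<kappa> / 2 * nsq x" by (simp add: left_diff_distrib)
  show ?thesis using A A2 B C D by linarith
qed

lemma delta_sum: "i \<in> I \<Longrightarrow> (\<Sum>j\<in>I. f j * (if j = i then c else 0)) = f i * (c :: 'b :: comm_ring_1)"
proof -
  assume i: "i \<in> I"
  have "(\<Sum>j\<in>I. f j * (if j = i then c else 0)) = (\<Sum>j\<in>I. if j = i then f j * c else 0)"
    by (intro sum.cong) auto
  also have "\<dots> = f i * c" using i by (subst sum.delta) simp_all
  finally show ?thesis .
qed

lemma nonneg_lemma:
  fixes z :: "nat \<Rightarrow> real"
  assumes z: "\<And>j. j \<in> I \<Longrightarrow> 0 \<le> z j" and j0: "j0 \<in> I" "0 < z j0"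
    and ez: "\<And>i. i \<in> I \<Longrightarrow> (\<Sum>j\<in>I. e i j * complex_of_real (z j)) = 0"
  shows False
proof -
  define a where "a j = (\<Sum>i\<in>I. E j i)" for j
  have h1: "(\<Sum>j\<in>I. cnj (a j) * complex_of_real (z j)) = complex_of_real (\<Sum>j\<in>I. z j)"
  proof -
    have "(\<Sum>j\<in>I. cnj (a j) * complex_of_real (z j)) = (\<Sum>j\<in>I. \<Sum>i\<in>I. E i j * complex_of_real (z j))"
      unfolding a_def by (intro sum.cong refl) (simp add: E_herm sum_distrib_right)
    also have "\<dots> = (\<Sum>i\<in>I. \<Sum>j\<in>I. E i j * complex_of_real (z j))"
      by (rule sum.swap)
    also have "\<dots> = (\<Sum>i\<in>I. complex_of_real (z i))"
    proof (intro sum.cong refl)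
      fix i assume i: "i \<in> I"
      have "(\<Sum>j\<in>I. E i j * complex_of_real (z j)) = (\<Sum>j\<in>I. one_m i j * complex_of_real (z j)) - (\<Sum>j\<in>I. e i j * complex_of_real (z j))"
        by (simp add: e_perp_def algebra_simps sum_subtractf)
      then show "(\<Sum>j\<in>I. E i j * complex_of_real (z j)) = complex_of_real (z i)"
        using one_left[OF i] ez[OF i] by simp
    qed
    finally show ?thesis by simp
  qed
  have h2: "\<exists>j\<in>I. 1 \<le> cmod (a j)"
  proof (rule ccontr)
    assume "\<not> ?thesis"
    then have lt: "\<And>j. j \<in> I \<Longrightarrow> cmod (a j) < 1" by auto
    have "(\<Sum>j\<in>I. z j) = cmod (\<Sum>j\<in>I. cnj (a j) * complex_of_real (z j))"
      unfolding h1 norm_of_real using sum_nonneg[of I z] z by simp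
    also have "\<dots> \<le> (\<Sum>j\<in>I. cmod (a j) * z j)"
      using z by (intro order.trans[OF norm_sum] sum_mono) (simp add: norm_mult)
    also have "\<dots> < (\<Sum>j\<in>I. z j)"
    proof (rule sum_strict_mono_ex1)
      show "\<forall>j\<in>I. cmod (a j) * z j \<le> z j"
      proof
        fix j assume "j \<in> I"
        then show "cmod (a j) * z j \<le> z j"
          using lt z by (intro mult_left_le_one_le) (auto simp: less_imp_le)
      qed
      show "\<exists>j\<in>I. cmod (a j) * z j < z j"
        using lt[OF j0(1)] j0 by (intro bexI[of _ j0]) simp_all
    qed simp
    finally show False by simp
  qed
  then obtain j where j: "j \<in> I" "1 \<le> cmod (a j)" by blast
  have "complex_of_real (\<Sum>m\<in>I. (cmod (\<Sum>j\<in>I. E m j * 1))\<^sup>2) = (\<Sum>i\<in>I. \<Sum>j\<in>I. cnj 1 * E i j * 1)"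
    by (rule quad[OF E_idem E_herm])
  then have qe: "complex_of_real (\<Sum>m\<in>I. (cmod (a m))\<^sup>2) = (\<Sum>i\<in>I. \<Sum>j\<in>I. E i j)"
    unfolding a_def by simp
  have "Re (\<Sum>i\<in>I. \<Sum>j\<in>I. E i j) = Re (complex_of_real (\<Sum>m\<in>I. (cmod (a m))\<^sup>2))"
    by (simp only: qe)
  also have "\<dots> = (\<Sum>m\<in>I. (cmod (a m))\<^sup>2)" by (rule Re_complex_of_real)
  also have "\<dots> \<ge> (cmod (a j))\<^sup>2"
    by (rule member_le_sum[OF j(1)]) auto
  moreover have "1 \<le> (cmod (a j))\<^sup>2" using j(2) by (rule one_le_power)
  ultimately have "1 \<le> Re (\<Sum>i\<in>I. \<Sum>j\<in>I. E i j)" by linarith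
  then show False using q_lt by simp
qed

lemma row_pos:
  assumes "\<And>j. j \<in> I \<Longrightarrow> 0 \<le> P j" "(\<Sum>j\<in>I. P j) = (1::real)"
  shows "\<exists>j\<in>I. 0 < P j"
proof (rule ccontr)
  assume "\<not> ?thesis"
  then have "(\<Sum>j\<in>I. P j) \<le> 0" by (intro sum_nonpos) (auto simp: not_less)
  then show False using assms by simp
qed

lemma nsq_zero: "nsq w \<le> 0 \<Longrightarrow> i \<in> I \<Longrightarrow> w i = 0"
proof -
  assume h: "nsq w \<le> 0" and i: "i \<in> I"
  have "(cmod (w i))\<^sup>2 \<le> nsq w" unfolding nsq_def by (rule member_le_sum[OF i]) simp_all
  moreover have "0 \<le> (cmod (w i))\<^sup>2" by simp
  ultimately have "(cmod (w i))\<^sup>2 = 0" using h by linarith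
  then show ?thesis by simp
qed

lemma L1_vv_pos: "m \<in> I \<Longrightarrow> 0 < L1 (vv m)"
proof (rule ccontr)
  assume m: "m \<in> I" and "\<not> 0 < L1 (vv m)"
  then have L0: "L1 (vv m) \<le> 0" by simp
  obtain j0 where j0: "j0 \<in> I" "0 < Pi m j0" using row_pos[of "Pi m"] Pi_nn Pi_sum m by blast
  obtain k where k: "k \<in> I" "0 < Q j0 k" using row_pos[of "Q j0"] Q_nn Q_sum j0 by blast
  obtain l where l: "l \<in> I" "0 < Pi j0 l" using row_pos[of "Pi j0"] Pi_nn Pi_sum j0 by blast
  have "nsq (ea k l (vv m)) \<le> (\<Sum>l'\<in>I. nsq (ea k l' (vv m)))"
    by (rule member_le_sum[OF l(1)]) (simp_all add: nsq_nonneg)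
  also have "\<dots> \<le> L1 (vv m)" unfolding L1_def
    apply (rule member_le_sum[OF k(1), where f = "\<lambda>k. \<Sum>l'\<in>I. nsq (ea k l' (vv m))"])
     apply (auto intro!: sum_nonneg nsq_nonneg)
    done
  finally have z0: "nsq (ea k l (vv m)) \<le> 0" using L0 by simp
  define z where "z j = sqrt (Q j k) * sqrt (Pi j l) * sqrt (Pi m j)" for j
  show False
  proof (rule nonneg_lemma[of z j0])
    show "0 \<le> z j" if "j \<in> I" for j using that by (simp add: z_def Pi_nn Q_nn m k l)
    show "j0 \<in> I" by fact
    show "0 < z j0" using j0 k l by (simp add: z_def)
    show "(\<Sum>j\<in>I. e i j * complex_of_real (z j)) = 0" if "i \<in> I" for i
      using nsq_zero[OF z0 that] by (simp add: ea_def zz_def cf_def vv_def z_def)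
  qed
qed

lemma e_diag: "i \<in> I \<Longrightarrow> e i i = complex_of_real (\<Sum>m\<in>I. (cmod (e m i))\<^sup>2) \<and> 0 < (\<Sum>m\<in>I. (cmod (e m i))\<^sup>2)"
proof -
  assume i: "i \<in> I"
  define \<delta> where "\<delta> j = (if j = i then 1 else 0 :: complex)" for j
  have dl: "(\<Sum>b\<in>I. f b * \<delta> b) = f i" for f :: "nat \<Rightarrow> complex"
    using delta_sum[OF i, of f 1] by (simp add: \<delta>_def)
  have cd: "cnj (\<delta> a) = \<delta> a" for a by (simp add: \<delta>_def)
  have "complex_of_real (\<Sum>m\<in>I. (cmod (\<Sum>j\<in>I. e m j * \<delta> j))\<^sup>2) = (\<Sum>a\<in>I. \<Sum>b\<in>I. cnj (\<delta> a) * e a b * \<delta> b)"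
    by (rule quad[OF e_idem e_herm])
  also have "\<dots> = (\<Sum>a\<in>I. e a i * \<delta> a)"
  proof (intro sum.cong refl)
    fix a
    have "(\<Sum>b\<in>I. cnj (\<delta> a) * e a b * \<delta> b) = \<delta> a * (\<Sum>b\<in>I. e a b * \<delta> b)"
      by (simp only: cd mult.assoc sum_distrib_left)
    also have "\<dots> = \<delta> a * e a i" by (simp only: dl)
    finally show "(\<Sum>b\<in>I. cnj (\<delta> a) * e a b * \<delta> b) = e a i * \<delta> a" by (simp only: mult.commute)
  qed
  also have "\<dots> = e i i" by (rule dl)
  finally have eq: "e i i = complex_of_real (\<Sum>m\<in>I. (cmod (e m i))\<^sup>2)"
    by (simp only: dl)
  have "0 < (\<Sum>m\<in>I. (cmod (e m i))\<^sup>2)"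
  proof (rule ccontr)
    assume "\<not> ?thesis"
    then have n0: "nsq (\<lambda>m. e m i) \<le> 0" by (simp add: nsq_def)
    define z where "z j = (if j = i then 1 else 0 :: real)" for j
    have zd: "complex_of_real (z j) = \<delta> j" for j by (simp add: z_def \<delta>_def)
    show False
    proof (rule nonneg_lemma[of z i])
      show "0 \<le> z j" for j by (simp add: z_def)
      show "i \<in> I" by fact
      show "0 < z i" by (simp add: z_def)
      show "(\<Sum>j\<in>I. e m j * complex_of_real (z j)) = 0" if "m \<in> I" for m
        unfolding zd dl using nsq_zero[OF n0 that] by simp
    qed
  qed
  with eq show ?thesis by simp
qed

definition kap :: real where "kap = Min ((\<lambda>m. L1 (vv m)) ` I)"
definition rho :: real where "rho = 1 - kap / 2"

lemma I_ne: "I \<noteq> {}" using d1 by (auto simp: idx_def)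

lemma kap_le: "m \<in> I \<Longrightarrow> kap \<le> L1 (vv m)"
  unfolding kap_def by (rule Min_le) auto

lemma kap_pos: "0 < kap"
  unfolding kap_def using I_ne L1_vv_pos by (subst Min_gr_iff) auto

lemma kap_le1: "kap \<le> 1"
proof -
  obtain m where m: "m \<in> I" using I_ne by auto
  have "kap \<le> L1 (vv m)" by (rule kap_le[OF m])
  also have "\<dots> \<le> nsq (vv m)" by (rule L1_le)
  also have "\<dots> = 1" by (rule nsq_vv[OF m])
  finally show ?thesis .
qed

lemma rho_pos: "0 < rho" using kap_le1 by (simp add: rho_def)
lemma rho_lt1: "rho < 1" using kap_pos by (simp add: rho_def)

lemma Qf_two: "Qf 2 y \<le> rho * nsq y"
  unfolding rho_def by (rule two_step[OF kap_le less_imp_le[OF kap_pos]])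

lemma Qf_2N: "Qf (2 * N + r) x \<le> rho ^ N * Qf r x"
proof (induction N)
  case 0
  then show ?case by simp
next
  case (Suc N)
  have "Qf (2 * Suc N + r) x = Qf (2 + (2 * N + r)) x" by simp
  also have "\<dots> \<le> rho * Qf (2 * N + r) x" by (rule Qf_le[OF Qf_two])
  also have "\<dots> \<le> rho * (rho ^ N * Qf r x)"
    using Suc.IH rho_pos by (intro mult_left_mono) auto
  finally show ?case by simp
qed

lemma Qf1_le: "Qf 1 x \<le> nsq x" using Qf1[of x] L1_nonneg[of x] by linarith

lemma Qf_bound: "Qf n x \<le> rho ^ (n div 2) * nsq x"
proof -
  have "Qf n x = Qf (2 * (n div 2) + n mod 2) x" by simp
  also have "\<dots> \<le> rho ^ (n div 2) * Qf (n mod 2) x" by (rule Qf_2N)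
  also have "\<dots> \<le> rho ^ (n div 2) * nsq x"
  proof (rule mult_left_mono)
    show "Qf (n mod 2) x \<le> nsq x"
    proof (cases "n mod 2 = 0")
      case True then show ?thesis by simp
    next
      case False then have "n mod 2 = 1" by simp
      then show ?thesis using Qf1_le by simp
    qed
    show "0 \<le> rho ^ (n div 2)" using rho_pos by simp
  qed
  finally show ?thesis .
qed

lemma rho_div_bound: "rho ^ (n div 2) \<le> sqrt rho ^ n / sqrt rho"
proof -
  define \<sigma> where "\<sigma> = sqrt rho"
  have s0: "0 < \<sigma>" using rho_pos by (simp add: \<sigma>_def)
  have s1: "\<sigma> \<le> 1" using rho_lt1 rho_pos by (simp add: \<sigma>_def)
  have r: "rho = \<sigma>\<^sup>2" using rho_pos by (simp add: \<sigma>_def)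
  have "\<sigma> ^ n = \<sigma> ^ (2 * (n div 2)) * \<sigma> ^ (n mod 2)"
    by (simp flip: power_add)
  also have "\<dots> \<ge> \<sigma> ^ (2 * (n div 2)) * \<sigma>"
  proof (rule mult_left_mono)
    show "\<sigma> \<le> \<sigma> ^ (n mod 2)"
    proof (cases "n mod 2 = 0")
      case True then show ?thesis using s1 by simp
    next
      case False then have "n mod 2 = 1" by simp
      then show ?thesis by simp
    qed
    show "0 \<le> \<sigma> ^ (2 * (n div 2))" using s0 by simp
  qed
  finally have "\<sigma> ^ (2 * (n div 2)) * \<sigma> \<le> \<sigma> ^ n" .
  then have "\<sigma> ^ (2 * (n div 2)) \<le> \<sigma> ^ n / \<sigma>" using s0 by (simp add: pos_le_divide_eq)
  moreover have "rho ^ (n div 2) = \<sigma> ^ (2 * (n div 2))" by (simp add: r power_mult)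
  ultimately show ?thesis by (simp add: \<sigma>_def)
qed

lemma phiH0: "phi_H0 d p x = (\<Sum>j\<in>I. complex_of_real (p j) * x j j)"
proof -
  have "phi_H0 d p x = (\<Sum>j\<in>I. \<Sum>k\<in>I. W0 p j k * x k j)"
    by (simp add: phi_H0_def mtrace_def mmult_def)
  also have "\<dots> = (\<Sum>j\<in>I. complex_of_real (p j) * x j j)"
  proof (intro sum.cong refl)
    fix j assume j: "j \<in> I"
    have "(\<Sum>k\<in>I. W0 p j k * x k j) = (\<Sum>k\<in>I. if k = j then complex_of_real (p j) * x j j else 0)"
      by (intro sum.cong) (auto simp: W0_def)
    also have "\<dots> = complex_of_real (p j) * x j j" using j by (subst sum.delta) simp_all
    finally show "(\<Sum>k\<in>I. W0 p j k * x k j) = complex_of_real (p j) * x j j" .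
  qed
  finally show ?thesis .
qed

lemma PHO1_diag: "i \<in> I \<Longrightarrow> P_HO d Q one_m i i = 1"
proof -
  assume i: "i \<in> I"
  have "P_HO d Q one_m i i = (\<Sum>k\<in>I. complex_of_real (Q i k))"
    unfolding PHO1 by (intro sum.cong refl) (simp add: Q_nn[OF i] flip: power2_eq_square)
  also have "\<dots> = 1" using Q_sum[OF i] by (simp flip: of_real_sum)
  finally show ?thesis .
qed

lemma PH1_diag: "i \<in> I \<Longrightarrow> P_H d Pi one_m i i = 1"
proof -
  assume i: "i \<in> I"
  have "P_H d Pi one_m i i = (\<Sum>l\<in>I. complex_of_real (sqrt (Pi i l) * sqrt (Pi i l)))"
    unfolding PH
  proof (intro sum.cong refl)
    fix l assume l: "l \<in> I"
    show "(\<Sum>l'\<in>I. complex_of_real (sqrt (Pi i l) * sqrt (Pi i l')) * one_m l l') = complex_of_real (sqrt (Pi i l) * sqrt (Pi i l))"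
      using one_left[OF l, of "\<lambda>l'. complex_of_real (sqrt (Pi i l) * sqrt (Pi i l'))"] by (simp add: mult.commute)
  qed
  also have "\<dots> = (\<Sum>l\<in>I. complex_of_real (Pi i l))"
    by (intro sum.cong refl) (simp add: Pi_nn[OF i] flip: power2_eq_square)
  also have "\<dots> = 1" using Pi_sum[OF i] by (simp flip: of_real_sum)
  finally show ?thesis .
qed

lemma PH_diag: "P_H d Pi b i i = (\<Sum>l\<in>I. \<Sum>l'\<in>I. cnj (vv i l) * b l l' * vv i l')"
  unfolding PH vv_def by (intro sum.cong refl) (simp add: mult_ac)

lemma phi_cons: "phi_HO d Pi Q p (a # as) = (\<Sum>i\<in>I. complex_of_real (p i) * (a i i * P_H d Pi (chain_nest d Pi Q as) i i))"
  unfolding phi_HO_def phiH0 by (intro sum.cong refl) (simp add: trans_exp_def schur_def PHO1_diag)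

definition fseq :: "(nat \<Rightarrow> real) \<Rightarrow> nat \<Rightarrow> complex" where
  "fseq p n = phi_HO d Pi Q p (e # replicate n E)"

lemma fseq_eq: "fseq p n = (\<Sum>i\<in>I. complex_of_real (p i) * (e i i * complex_of_real (Qf n (vv i))))"
  unfolding fseq_def phi_cons PH_diag form ..

fun ct :: "cmat list \<Rightarrow> cmat \<Rightarrow> cmat" where
  "ct [] b = b"
| "ct (a # as) b = trans_exp d Pi Q a (ct as b)"

lemma chain_app: "chain_nest d Pi Q (as @ bs) = ct as (chain_nest d Pi Q bs)"
  by (induction as) auto

lemma chain_ct: "chain_nest d Pi Q as = ct as one_m"
  by (induction as) auto

lemma ct_lin:
  assumes "\<And>i j. i \<in> I \<Longrightarrow> j \<in> I \<Longrightarrow> b3 i j = b1 i j + b2 i j"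
  shows "i \<in> I \<Longrightarrow> j \<in> I \<Longrightarrow> ct as b3 i j = ct as b1 i j + ct as b2 i j"
proof (induction as arbitrary: i j)
  case Nil
  then show ?case using assms by simp
next
  case (Cons a as)
  have "P_H d Pi (ct as b3) i j = P_H d Pi (ct as b1) i j + P_H d Pi (ct as b2) i j"
    unfolding P_H_def
    by (simp add: Cons.IH distrib_left flip: sum.distrib cong: sum.cong)
  then show ?case by (simp add: trans_exp_def schur_def distrib_left)
qed

lemma ct_zero: "ct as (\<lambda>i j. 0) = (\<lambda>i j. 0)"
  by (induction as) (auto simp: trans_exp_def schur_def P_H_def)

lemma ct_cong:
  assumes "\<And>i j. i \<in> I \<Longrightarrow> j \<in> I \<Longrightarrow> b1 i j = b2 i j"
  shows "i \<in> I \<Longrightarrow> j \<in> I \<Longrightarrow> ct as b1 i j = ct as b2 i j"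
  using ct_lin[of b1 b2 "\<lambda>i j. 0" _ _ as] assms by (simp add: ct_zero)

lemma te_one: "i \<in> I \<Longrightarrow> j \<in> I \<Longrightarrow> trans_exp d Pi Q one_m one_m i j = one_m i j"
proof -
  assume i: "i \<in> I" and j: "j \<in> I"
  have t: "trans_exp d Pi Q one_m one_m i j = one_m i j * P_HO d Q one_m i j * P_H d Pi one_m i j"
    by (simp add: trans_exp_def schur_def)
  show ?thesis
  proof (cases "i = j")
    case True
    then show ?thesis unfolding t using PHO1_diag[OF i] PH1_diag[OF i] by simp
  next
    case False
    then show ?thesis unfolding t by (simp add: one_m_def)
  qed
qed

lemma phi_split: "phi_HO d Pi Q p (as @ [e]) + phi_HO d Pi Q p (as @ [E]) = phi_HO d Pi Q p as"
proof -
  have key: "chain_nest d Pi Q (as @ [e]) j j + chain_nest d Pi Q (as @ [E]) j j = chain_nest d Pi Q as j j"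
    if j: "j \<in> I" for j
  proof -
    have "chain_nest d Pi Q as j j = ct as (trans_exp d Pi Q one_m one_m) j j"
      unfolding chain_ct using te_one j by (intro ct_cong[symmetric]) auto
    also have "\<dots> = ct as (trans_exp d Pi Q e one_m) j j + ct as (trans_exp d Pi Q E one_m) j j"
      by (rule ct_lin[OF _ j j]) (simp add: trans_exp_def schur_def e_perp_def algebra_simps)
    finally show ?thesis by (simp add: chain_app)
  qed
  show ?thesis unfolding phi_HO_def phiH0
    by (simp add: key flip: sum.distrib distrib_left)
qed

lemma tau_step: "phi_HO d Pi Q p (e_tau e n) = fseq p n - fseq p (Suc n)"
proof -
  have "phi_HO d Pi Q p (e_tau e n) + fseq p (Suc n) = fseq p n"
    using phi_split[of p "e # replicate n E"]
    by (simp add: e_tau_def fseq_def replicate_append_same[symmetric] del: replicate_append_same)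
  then show ?thesis by (simp add: algebra_simps)
qed

definition rr :: "nat \<Rightarrow> real" where "rr i = (\<Sum>m\<in>I. (cmod (e m i))\<^sup>2)"

definition gseq :: "(nat \<Rightarrow> real) \<Rightarrow> nat \<Rightarrow> real" where
  "gseq p n = (\<Sum>i\<in>I. p i * (rr i * Qf n (vv i)))"

lemma fseq_g: "fseq p n = complex_of_real (gseq p n)"
  unfolding fseq_eq gseq_def of_real_sum
  by (intro sum.cong refl) (simp add: e_diag rr_def)

lemma main_rec:
  assumes pv: "prob_vector d p"
  shows "recurrent d Pi Q p e"
proof -
  have p_nn: "\<And>i. i \<in> I \<Longrightarrow> 0 \<le> p i" using pv by (simp add: prob_vector_def)
  have rr_pos: "\<And>i. i \<in> I \<Longrightarrow> 0 < rr i" using e_diag by (simp add: rr_def)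
  define S where "S = (\<Sum>i\<in>I. p i * rr i)"
  define \<sigma> where "\<sigma> = sqrt rho"
  have s0: "0 < \<sigma>" using rho_pos by (simp add: \<sigma>_def)
  have s1: "\<sigma> < 1" using rho_pos rho_lt1 by (simp add: \<sigma>_def)
  have g0: "gseq p 0 = S"
    unfolding gseq_def S_def by (intro sum.cong refl) (simp add: nsq_vv)
  have Spos: "0 < S"
  proof -
    obtain i0 where i0: "i0 \<in> I" "0 < p i0" using row_pos[of p] pv by (auto simp: prob_vector_def)
    have "0 < p i0 * rr i0" using i0 rr_pos by simp
    also have "\<dots> \<le> S" unfolding S_def
      by (rule member_le_sum[OF i0(1)]) (auto intro!: mult_nonneg_nonneg p_nn less_imp_le[OF rr_pos])
    finally show ?thesis .
  qed
  have g_nn: "0 \<le> gseq p n" for n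
    unfolding gseq_def by (auto intro!: sum_nonneg mult_nonneg_nonneg p_nn less_imp_le[OF rr_pos] Qf_nonneg)
  have g_le: "gseq p n \<le> S * (\<sigma> ^ n / \<sigma>)" for n
  proof -
    have "gseq p n \<le> (\<Sum>i\<in>I. p i * (rr i * (\<sigma> ^ n / \<sigma>)))"
      unfolding gseq_def
    proof (intro sum_mono mult_left_mono)
      fix i assume i: "i \<in> I"
      have "Qf n (vv i) \<le> rho ^ (n div 2) * nsq (vv i)" by (rule Qf_bound)
      also have "\<dots> = rho ^ (n div 2)" by (simp add: nsq_vv i)
      also have "\<dots> \<le> \<sigma> ^ n / \<sigma>" unfolding \<sigma>_def by (rule rho_div_bound)
      finally show "Qf n (vv i) \<le> \<sigma> ^ n / \<sigma>" .
      show "0 \<le> rr i" using rr_pos[OF i] by simp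
      show "0 \<le> p i" using p_nn[OF i] .
    qed
    also have "\<dots> = S * (\<sigma> ^ n / \<sigma>)" unfolding S_def sum_distrib_right by (intro sum.cong refl) (simp add: mult_ac)
    finally show ?thesis .
  qed
  have hlim: "(\<lambda>n. S * (\<sigma> ^ n / \<sigma>)) \<longlonglongrightarrow> S * (0 / \<sigma>)"
  proof (intro tendsto_intros LIMSEQ_power_zero)
    show "norm \<sigma> < 1" using s0 s1 by simp
  qed (use s0 in auto)
  have glim: "gseq p \<longlonglongrightarrow> 0"
    by (rule tendsto_sandwich[where f = "\<lambda>n. 0" and h = "\<lambda>n. S * (\<sigma> ^ n / \<sigma>)"])
       (use g_nn g_le hlim in auto)
  have flim: "fseq p \<longlonglongrightarrow> 0"
    using tendsto_of_real[OF glim, where 'a = complex] by (simp add: fseq_g[abs_def])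
  have f0: "phi_HO d Pi Q p [e] = fseq p 0" by (simp add: fseq_def)
  have f0nz: "fseq p 0 \<noteq> 0" using Spos g0 by (simp add: fseq_g)
  have "(\<lambda>n. fseq p n - fseq p (Suc n)) sums (fseq p 0 - 0)" by (rule telescope_sums'[OF flim])
  then have "(\<lambda>n. (fseq p n - fseq p (Suc n)) / fseq p 0) sums ((fseq p 0 - 0) / fseq p 0)"
    by (rule sums_divide)
  then have "(\<lambda>n. phi_HO d Pi Q p (e_tau e n) / phi_HO d Pi Q p [e]) sums 1"
    using f0nz by (simp add: tau_step f0)
  then show ?thesis unfolding recurrent_def using f0 f0nz by simp
qed

end

theorem mainTheorem7:
  fixes d :: nat and Pi Q :: "nat \<Rightarrow> nat \<Rightarrow> real" and p :: "nat \<Rightarrow> real" and e :: cmat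
  assumes "d \<ge> 1"
    and "stochastic d Pi" and "stochastic d Q"
    and "prob_vector d p"
    and "is_projection d e"
    and "Re (\<Sum>i\<in>idx d. \<Sum>j\<in>idx d. e_perp e i j) < 1 / real d"
  shows "recurrent d Pi Q p e"
proof -
  have "1 / real d \<le> 1" using assms(1) by simp
  then have "Re (\<Sum>i\<in>idx d. \<Sum>j\<in>idx d. e_perp e i j) < 1" using assms(6) by linarith
  then interpret setting d Pi Q e using assms by unfold_locales auto
  show ?thesis by (rule main_rec[OF assms(4)])
qed

end
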